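(* Let $n$ be a positive integer and let $\lambda$ and $\mu$ be integer partitions of $n$. If $\lambda_1 = \mu_1$ and $\mathrm{pre}_2(\lambda) = \mathrm{pre}_2(\mu)$, then $\lambda = \mu$.
   Context: An integer partition $\lambda = (\lambda_1, \dots, \lambda_\ell)$ of a positive integer $n$ is a weakly decreasing finite sequence of positive integers whose sum is $n$; the $\lambda_i$ are its parts and $\ell(\lambda)=\ell$ is its length. For a partition $\lambda = (\lambda_1,\dots,\lambda_\ell)$, $\mathrm{pre}_2(\lambda)$ denotes the partition whose multiset of parts is the multiset $\{\!\{\lambda_i\lambda_j : 1 \le i < j \le \ell\}\!\}$ (with multiplicities, arranged in weakly decreasing order); if $\ell < 2$ it is the empty partition. *)

theory Defs
  imports Main "HOL-Library.Multiset"
begin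

definition is_partition :: "nat \<Rightarrow> nat list \<Rightarrow> bool" where
  "is_partition n lam \<longleftrightarrow> sorted_wrt (\<ge>) lam \<and> (\<forall>x\<in>set lam. 0 < x) \<and> sum_list lam = n"

text \<open>pre_2: multiset of pairwise products lam_i * lam_j over index pairs i < j.
  Since a partition is determined by its multiset of parts, we represent pre_2 as that multiset.\<close>
definition pre2 :: "nat list \<Rightarrow> nat multiset" where
  "pre2 lam = image_mset (\<lambda>(i, j). lam ! i * lam ! j)
     (mset_set {(i, j). i < j \<and> j < length lam})"

end

theory Submission
  imports Defs
begin

definition PS :: "nat \<Rightarrow> (nat \<times> nat) set" where
  "PS m = {(i, j). i < j \<and> j < m}"

lemma PS_finite: "finite (PS m)"
  by (rule finite_subset[of _ "{..<m} \<times> {..<m}"]) (auto simp: PS_def)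

lemma PS_less: assumes "1 \<le> m" "m < m'" shows "card (PS m) < card (PS m')"
proof (rule psubset_card_mono[OF PS_finite])
  have "(0, m) \<in> PS m'" "(0, m) \<notin> PS m" using assms by (auto simp: PS_def)
  moreover have "PS m \<subseteq> PS m'" using assms by (auto simp: PS_def)
  ultimately show "PS m \<subset> PS m'" by blast
qed

lemma size_pre2: "size (pre2 l) = card (PS (length l))"
  by (simp add: pre2_def PS_def[symmetric])

definition AK :: "nat \<Rightarrow> nat \<Rightarrow> (nat \<times> nat) set" where
  "AK m k = {(i, j). i < j \<and> j < m \<and> k \<le> j}"

definition BK :: "nat \<Rightarrow> (nat \<times> nat) set" where
  "BK k = {(i, j). i < j \<and> j < k}"

lemma AK_finite: "finite (AK m k)"
  by (rule finite_subset[OF _ PS_finite[of m]]) (auto simp: AK_def PS_def)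

lemma BK_finite: "finite (BK k)"
  by (rule finite_subset[OF _ PS_finite[of k]]) (auto simp: BK_def PS_def)

lemma split_PS: "k \<le> m \<Longrightarrow> PS m = BK k \<union> AK m k" "BK k \<inter> AK m k = {}"
  by (auto simp: PS_def AK_def BK_def)

lemma pre2_split:
  assumes "k \<le> length l"
  shows "pre2 l = image_mset (\<lambda>(i, j). l ! i * l ! j) (mset_set (BK k))
                + image_mset (\<lambda>(i, j). l ! i * l ! j) (mset_set (AK (length l) k))"
proof -
  have "mset_set (PS (length l)) = mset_set (BK k) + mset_set (AK (length l) k)"
    using split_PS(1)[OF assms] split_PS(2) BK_finite AK_finite by (simp add: mset_set_Union)
  thus ?thesis by (simp add: pre2_def PS_def[symmetric])
qed

lemma max_AK:
  fixes l :: "nat list"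
  assumes "sorted_wrt (\<ge>) l" "1 \<le> k" "k < length l"
  shows "Max ((\<lambda>(i, j). l ! i * l ! j) ` AK (length l) k) = l ! 0 * l ! k"
proof (rule Max_eqI)
  show "finite ((\<lambda>(i, j). l ! i * l ! j) ` AK (length l) k)" using AK_finite by simp
  show "l ! 0 * l ! k \<in> (\<lambda>(i, j). l ! i * l ! j) ` AK (length l) k"
    using assms by (force simp: AK_def)
  fix y assume "y \<in> (\<lambda>(i, j). l ! i * l ! j) ` AK (length l) k"
  then obtain i j where ij: "i < j" "j < length l" "k \<le> j" "y = l ! i * l ! j"
    by (auto simp: AK_def)
  have "l ! i \<le> l ! 0"
    using assms(1) ij by (cases "i = 0") (auto simp: sorted_wrt_iff_nth_less)
  moreover have "l ! j \<le> l ! k"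
    using assms(1) ij by (cases "j = k") (auto simp: sorted_wrt_iff_nth_less)
  ultimately show "y \<le> l ! 0 * l ! k" using ij(4) mult_le_mono[of "l ! i" "l ! 0" "l ! j" "l ! k"] by simp
qed

theorem lemma2:
  fixes n :: nat and lam mu :: "nat list"
  assumes "0 < n"
    and "is_partition n lam" and "is_partition n mu"
    and "hd lam = hd mu"
    and "pre2 lam = pre2 mu"
  shows "lam = mu"
proof -
  have sl: "sorted_wrt (\<ge>) lam" "\<forall>x\<in>set lam. 0 < x" "sum_list lam = n"
    using assms(2) by (auto simp: is_partition_def)
  have sm: "sorted_wrt (\<ge>) mu" "\<forall>x\<in>set mu. 0 < x" "sum_list mu = n"
    using assms(3) by (auto simp: is_partition_def)
  have nl: "lam \<noteq> []" using sl assms(1) by auto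
  have nm: "mu \<noteq> []" using sm assms(1) by auto
  have len: "length lam = length mu"
  proof -
    have "card (PS (length lam)) = card (PS (length mu))"
      using assms(5) size_pre2 by metis
    moreover have "1 \<le> length lam" "1 \<le> length mu" using nl nm by (auto simp: Suc_le_eq)
    ultimately show ?thesis using PS_less
      by (metis linorder_neqE_nat less_not_refl)
  qed
  define m where "m = length lam"
  have h0: "lam ! 0 = mu ! 0" using assms(4) nl nm by (simp add: hd_conv_nth)
  have pos: "lam ! 0 > 0" using sl(2) nl by auto
  have main: "\<forall>i<k. lam ! i = mu ! i" if "1 \<le> k" "k \<le> m" for k
    using that
  proof (induction k rule: dec_induct)
    case base then show ?case using h0 by auto
  next
    case (step k)
    have IH: "\<forall>i<k. lam ! i = mu ! i" using step by simp
    have k1: "k < length lam" "k < length mu" using step len m_def by auto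
    have eqB: "image_mset (\<lambda>(i, j). lam ! i * lam ! j) (mset_set (BK k))
             = image_mset (\<lambda>(i, j). mu ! i * mu ! j) (mset_set (BK k))"
      using IH BK_finite by (intro image_mset_cong) (auto simp: BK_def)
    have eqA: "image_mset (\<lambda>(i, j). lam ! i * lam ! j) (mset_set (AK m k))
             = image_mset (\<lambda>(i, j). mu ! i * mu ! j) (mset_set (AK m k))"
      using assms(5) pre2_split[of k lam] pre2_split[of k mu] k1 eqB len m_def by simp
    have "(\<lambda>(i, j). lam ! i * lam ! j) ` AK m k = (\<lambda>(i, j). mu ! i * mu ! j) ` AK m k"
      using arg_cong[OF eqA, of set_mset] AK_finite by simp
    hence "lam ! 0 * lam ! k = mu ! 0 * mu ! k"
      using max_AK[OF sl(1) step(1) k1(1)] max_AK[OF sm(1) step(1) k1(2)] len m_def by simp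
    hence "lam ! k = mu ! k" using h0 pos by simp
    with IH show ?case by (auto simp: less_Suc_eq)
  qed
  have "\<forall>i<m. lam ! i = mu ! i" using main[of m] nl m_def by (simp add: Suc_le_eq)
  thus ?thesis using len m_def by (auto intro: nth_equalityI)
qed

end
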